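(* Let $G$ be an $n$-vertex graph and $k$ a positive integer such that for every two disjoint subsets $S,T\subseteq V(G)$ with $|S|=|T|=k$ there is an edge of $G$ between $S$ and $T$. Let $\mathcal{M}$ be a collection of pairwise disjoint pairs $\{x,y\}\subseteq V(G)$ (where $x=y$ is allowed). Then $G\cup\mathcal{M}$ contains an $\mathcal{M}$-alternating path which uses all but at most $2k-1$ of the pairs in $\mathcal{M}$.
   Context: $G\cup\mathcal{M}$ denotes the graph obtained from $G$ by adding the edge $xy$ for every pair $\{x,y\}\in\mathcal{M}$ with $x\ne y$. A path in $G\cup\mathcal{M}$ is $\mathcal{M}$-alternating if it is of the form $e_1f_1e_2f_2\dots e_lf_l$, where the $e_i$ are edges of $G$ and each $f_i$ is either an edge $xy$ with $\{x,y\}\in\mathcal{M}$, $x\ne y$, or a single vertex $x$ with $\{x,x\}\in\mathcal{M}$. A pair is used by the path if it appears as one of the $f_i$. *)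

theory Defs
  imports Main
begin

definition simple_graph :: "'a set \<Rightarrow> ('a \<Rightarrow> 'a \<Rightarrow> bool) \<Rightarrow> bool" where
  "simple_graph V E \<longleftrightarrow> finite V \<and> (\<forall>x y. E x y \<longrightarrow> x \<in> V \<and> y \<in> V)
     \<and> (\<forall>x y. E x y \<longrightarrow> E y x) \<and> (\<forall>x. \<not> E x x)"

definition disjoint_pairs :: "'a set \<Rightarrow> 'a set set \<Rightarrow> bool" where
  "disjoint_pairs V M \<longleftrightarrow> (\<forall>p\<in>M. (\<exists>x y. p = {x, y}) \<and> p \<subseteq> V)
     \<and> (\<forall>p\<in>M. \<forall>q\<in>M. p \<noteq> q \<longrightarrow> p \<inter> q = {})"

text \<open>An M-alternating path e_1 f_1 ... e_l f_l is encoded by its start vertex v0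
  and the oriented list ps of used pairs (a_i, b_i): the walk is
  v0, a_1, (b_1), a_2, (b_2), ..., where b_i is omitted if a_i = b_i
  (f_i is then the single vertex a_i).  Each e_i is the G-edge from the previous
  vertex (v0 or b_{i-1}) to a_i.\<close>
definition path_vertices :: "'a \<Rightarrow> ('a \<times> 'a) list \<Rightarrow> 'a list" where
  "path_vertices v0 ps = v0 # concat (map (\<lambda>(a, b). if a = b then [a] else [a, b]) ps)"

definition alternating_path ::
  "('a \<Rightarrow> 'a \<Rightarrow> bool) \<Rightarrow> 'a set set \<Rightarrow> 'a \<Rightarrow> ('a \<times> 'a) list \<Rightarrow> bool" where
  "alternating_path E M v0 ps \<longleftrightarrow>
     distinct (path_vertices v0 ps)
     \<and> (\<forall>i < length ps. {fst (ps ! i), snd (ps ! i)} \<in> M)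
     \<and> (ps \<noteq> [] \<longrightarrow> E v0 (fst (ps ! 0)))
     \<and> (\<forall>i. Suc i < length ps \<longrightarrow> E (snd (ps ! i)) (fst (ps ! Suc i)))"

definition used_pairs :: "('a \<times> 'a) list \<Rightarrow> 'a set set" where
  "used_pairs ps = (\<lambda>(a, b). {a, b}) ` set ps"

end

theory Submission
  imports Defs
begin

definition top :: "'a \<Rightarrow> ('a \<times> 'a) list \<Rightarrow> 'a" where
  "top v0 ps = (if ps = [] then v0 else snd (last ps))"

definition chunk :: "'a \<times> 'a \<Rightarrow> 'a list" where
  "chunk p = (if fst p = snd p then [fst p] else [fst p, snd p])"

lemma pv_append: "path_vertices v0 (ps @ [p]) = path_vertices v0 ps @ chunk p"
  by (cases p) (simp add: path_vertices_def chunk_def)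

lemma pv_butlast: "ps \<noteq> [] \<Longrightarrow> path_vertices v0 ps = path_vertices v0 (butlast ps) @ chunk (last ps)"
  by (metis append_butlast_last_id pv_append)

lemma top_last: "last (path_vertices v0 ps) = top v0 ps"
proof (cases "ps = []")
  case True thus ?thesis by (simp add: path_vertices_def top_def)
next
  case False
  then show ?thesis by (subst pv_butlast[OF False]) (auto simp: chunk_def top_def)
qed

lemma top_in: "top v0 ps \<in> set (path_vertices v0 ps)"
proof -
  have "path_vertices v0 ps \<noteq> []" by (simp add: path_vertices_def)
  from last_in_set[OF this] show ?thesis by (simp only: top_last)
qed

lemma pair_in_pv: assumes "(c, d) \<in> set ps" shows "c \<in> set (path_vertices v0 ps) \<and> d \<in> set (path_vertices v0 ps)"
proof -
  have "{c,d} \<subseteq> set ((\<lambda>(a, b). if a = b then [a] else [a, b]) (c,d))" by auto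
  moreover have "set ((\<lambda>(a, b). if a = b then [a] else [a, b]) (c,d)) \<subseteq> set (concat (map (\<lambda>(a, b). if a = b then [a] else [a, b]) ps))"
    using assms by (auto simp del: split_paired_all)
  moreover have "set (concat (map (\<lambda>(a, b). if a = b then [a] else [a, b]) ps)) \<subseteq> set (path_vertices v0 ps)"
    unfolding path_vertices_def by (rule set_subset_Cons)
  ultimately show ?thesis by blast
qed

lemma alt_append:
  assumes "alternating_path E M v0 ps" "{a, b} \<in> M" "E (top v0 ps) a"
    "distinct (path_vertices v0 (ps @ [(a, b)]))"
  shows "alternating_path E M v0 (ps @ [(a, b)])"
  unfolding alternating_path_def
proof (intro conjI allI impI)
  show "distinct (path_vertices v0 (ps @ [(a, b)]))" by fact
  fix i assume "i < length (ps @ [(a, b)])"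
  then show "{fst ((ps @ [(a, b)]) ! i), snd ((ps @ [(a, b)]) ! i)} \<in> M"
    using assms(1,2) unfolding alternating_path_def
    by (cases "i < length ps") (auto simp: nth_append)
next
  assume "ps @ [(a, b)] \<noteq> []"
  show "E v0 (fst ((ps @ [(a, b)]) ! 0))"
    using assms(1,3) unfolding alternating_path_def top_def
    by (cases ps) auto
next
  fix i assume i: "Suc i < length (ps @ [(a, b)])"
  show "E (snd ((ps @ [(a, b)]) ! i)) (fst ((ps @ [(a, b)]) ! Suc i))"
  proof (cases "Suc i < length ps")
    case True thus ?thesis using assms(1) unfolding alternating_path_def by (simp add: nth_append)
  next
    case False
    then have "Suc i = length ps" using i by simp
    then have ne: "ps \<noteq> []" by auto
    have "i = length ps - 1" using \<open>Suc i = length ps\<close> by simp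
    then have "ps ! i = last ps" using ne by (simp add: last_conv_nth)
    note ne this
    then show ?thesis using assms(3) \<open>Suc i = length ps\<close> unfolding top_def by (simp add: nth_append)
  qed
qed

lemma alt_butlast:
  assumes "alternating_path E M v0 ps"
  shows "alternating_path E M v0 (butlast ps)"
proof (cases "ps = []")
  case True thus ?thesis using assms by simp
next
  case False
  have d: "distinct (path_vertices v0 (butlast ps))"
    using assms pv_butlast[OF False, of v0] unfolding alternating_path_def by (metis distinct_append)
  show ?thesis unfolding alternating_path_def
  proof (intro conjI allI impI)
    show "distinct (path_vertices v0 (butlast ps))" by (rule d)
    fix i assume "i < length (butlast ps)"
    then show "{fst (butlast ps ! i), snd (butlast ps ! i)} \<in> M"
      using assms unfolding alternating_path_def by (simp add: nth_butlast)
  next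
    assume "butlast ps \<noteq> []"
    then have "0 < length ps - 1" by (metis length_butlast length_greater_0_conv)
    then have "butlast ps ! 0 = ps ! 0" by (simp add: nth_butlast)
    then show "E v0 (fst (butlast ps ! 0))"
      using assms False unfolding alternating_path_def by simp
  next
    fix i assume "Suc i < length (butlast ps)"
    then show "E (snd (butlast ps ! i)) (fst (butlast ps ! Suc i))"
      using assms unfolding alternating_path_def by (simp add: nth_butlast)
  qed
qed

lemma used_append: "used_pairs (ps @ [(a, b)]) = insert {a, b} (used_pairs ps)"
  by (simp add: used_pairs_def)

lemma used_notin: "a \<notin> set (path_vertices v0 ps) \<Longrightarrow> {a, b} \<notin> used_pairs ps"
  unfolding used_pairs_def using pair_in_pv by (force simp: doubleton_eq_iff)

lemma used_butlast: "card (used_pairs ps) \<le> card (used_pairs (butlast ps)) + 1"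
proof (cases "ps = []")
  case True thus ?thesis by simp
next
  case False
  then obtain a b where "ps = butlast ps @ [(a, b)]" by (metis append_butlast_last_id surj_pair)
  then have "used_pairs ps = insert {a, b} (used_pairs (butlast ps))" by (metis used_append)
  moreover have "finite (used_pairs (butlast ps))" by (simp add: used_pairs_def)
  ultimately show ?thesis by (simp add: card_insert_le_m1 card_insert_if)
qed

lemma card_le_Union:
  assumes "finite V" "disjoint_pairs V M" "U \<subseteq> M"
  shows "card U \<le> card (\<Union>U)"
proof -
  have fin: "finite U" using assms unfolding disjoint_pairs_def
    by (meson Pow_iff finite_Pow_iff finite_subset subsetI)
  have "\<forall>A\<in>U. finite A" using assms unfolding disjoint_pairs_def by (meson finite_subset subsetD)
  moreover have "pairwise disjnt U" using assms unfolding disjoint_pairs_def pairwise_def disjnt_def by blast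
  ultimately have "card (\<Union>U) = sum card U" using fin card_Union_disjoint by blast
  moreover have "\<forall>A\<in>U. 1 \<le> card A" using assms \<open>\<forall>A\<in>U. finite A\<close> unfolding disjoint_pairs_def
    by (metis One_nat_def Suc_leI card_gt_0_iff insert_not_empty subsetD)
  ultimately show ?thesis using sum_mono[of U "\<lambda>_. 1" card] by simp
qed

definition stinv where
  "stinv E M V X U st = (case st of None \<Rightarrow> card M \<le> card X + card U
     | Some (v0, ps) \<Rightarrow> alternating_path E M v0 ps \<and> set (path_vertices v0 ps) \<subseteq> V
        \<and> set (path_vertices v0 ps) \<inter> \<Union>U = {} \<and> set (path_vertices v0 ps) \<inter> X = {}
        \<and> card M \<le> card X + card U + card (used_pairs ps) + 1)"

definition meas where
  "meas U st = 2 * card U + (case st of None \<Rightarrow> 0 | Some (v0, ps) \<Rightarrow> length ps + 1)"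

lemma main:
  assumes G: "simple_graph V E" and kpos: "k > 0"
    and H: "\<forall>S T. S \<subseteq> V \<and> T \<subseteq> V \<and> S \<inter> T = {} \<and> card S = k \<and> card T = k
              \<longrightarrow> (\<exists>x\<in>S. \<exists>y\<in>T. E x y)"
    and D: "disjoint_pairs V M"
  shows "meas U st = n \<Longrightarrow> U \<subseteq> M \<Longrightarrow> X \<subseteq> V \<Longrightarrow> card X < k \<Longrightarrow> X \<inter> \<Union>U = {}
     \<Longrightarrow> (\<forall>x\<in>X. \<forall>y\<in>\<Union>U. \<not> E x y) \<Longrightarrow> stinv E M V X U st
     \<Longrightarrow> \<exists>v0 ps. alternating_path E M v0 ps \<and> card M \<le> card (used_pairs ps) + (2 * k - 1)"
proof (induction n arbitrary: X U st rule: less_induct)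
  case (less n)
  have finV: "finite V" using G by (simp add: simple_graph_def)
  have MV: "\<forall>p\<in>M. p \<subseteq> V" using D by (simp add: disjoint_pairs_def)
  have finM: "finite M" using finV MV by (meson Pow_iff finite_Pow_iff finite_subset subsetI)
  have finU: "finite U" using less.prems(2) finM finite_subset by blast
  have finX: "finite X" using less.prems(3) finV finite_subset by blast
  have disj: "\<And>p q. p \<in> M \<Longrightarrow> q \<in> M \<Longrightarrow> p \<noteq> q \<Longrightarrow> p \<inter> q = {}"
    using D by (simp add: disjoint_pairs_def)
  have pairs: "\<And>p. p \<in> M \<Longrightarrow> \<exists>x y. p = {x, y}"
    using D by (simp add: disjoint_pairs_def)
  show ?case
  proof (cases st)
    case None
    show ?thesis
    proof (cases "U = {}")
      case True
      then have "card M \<le> card X" using less.prems(7) None by (simp add: stinv_def)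
      then have "card M \<le> card (used_pairs []) + (2 * k - 1)" using less.prems(4) by (simp add: used_pairs_def)
      moreover have "alternating_path E M v0 []" for v0 by (simp add: alternating_path_def path_vertices_def)
      ultimately show ?thesis by blast
    next
      case False
      then obtain q where q: "q \<in> U" by blast
      then obtain x y where xy: "q = {x, y}" using pairs less.prems(2) by blast
      have qV: "q \<subseteq> V" using q less.prems(2) MV by blast
      let ?U = "U - {q}"
      let ?st = "Some (x, [])"
      have cU: "card U = card ?U + 1" using card_Suc_Diff1[OF finU q] by simp
      have m: "meas ?U ?st < n" using less.prems(1) None cU by (simp add: meas_def)
      have xnot: "x \<notin> \<Union>?U" using disj q xy less.prems(2) by blast
      have "stinv E M V X ?U ?st"
        unfolding stinv_def
      proof (simp only: option.case prod.case, intro conjI)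
        show "alternating_path E M x []" by (simp add: alternating_path_def path_vertices_def)
        show "set (path_vertices x []) \<subseteq> V" using qV xy by (simp add: path_vertices_def)
        show "set (path_vertices x []) \<inter> \<Union>?U = {}" using xnot by (simp add: path_vertices_def)
        show "set (path_vertices x []) \<inter> X = {}" using less.prems(5) q xy by (auto simp: path_vertices_def)
        show "card M \<le> card X + card ?U + card (used_pairs []) + 1"
          using less.prems(7) None cU by (simp add: stinv_def used_pairs_def)
      qed
      moreover have "?U \<subseteq> M" "X \<inter> \<Union>?U = {}" "\<forall>x\<in>X. \<forall>y\<in>\<Union>?U. \<not> E x y"
        using less.prems(2,5,6) by auto
      ultimately show ?thesis
        using less.IH[OF m refl _ less.prems(3,4)] by simp
    qed
  next
    case (Some a)
    then obtain v0 ps where st: "st = Some (v0, ps)" by (cases a) auto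
    have inv: "alternating_path E M v0 ps" "set (path_vertices v0 ps) \<subseteq> V"
        "set (path_vertices v0 ps) \<inter> \<Union>U = {}" "set (path_vertices v0 ps) \<inter> X = {}"
        "card M \<le> card X + card U + card (used_pairs ps) + 1"
      using less.prems(7) st by (auto simp: stinv_def)
    let ?b = "top v0 ps"
    show ?thesis
    proof (cases "\<exists>y\<in>\<Union>U. E ?b y")
      case True
      then obtain x q where q: "q \<in> U" "x \<in> q" "E ?b x" by blast
      then obtain y where xy: "q = {x, y}" using pairs less.prems(2) by blast
      have qV: "q \<subseteq> V" using q less.prems(2) MV by blast
      let ?U = "U - {q}"
      let ?ps = "ps @ [(x, y)]"
      let ?st = "Some (v0, ?ps)"
      have cU: "card U = card ?U + 1" using card_Suc_Diff1[OF finU q(1)] by simp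
      have m: "meas ?U ?st < n" using less.prems(1) st cU by (simp add: meas_def)
      have qnot: "q \<inter> \<Union>?U = {}" using disj q less.prems(2) by blast
      have qpv: "q \<inter> set (path_vertices v0 ps) = {}" using inv(3) q by blast
      have qX: "q \<inter> X = {}" using less.prems(5) q by blast
      have pv: "set (path_vertices v0 ?ps) = set (path_vertices v0 ps) \<union> q"
        using xy by (auto simp: pv_append chunk_def)
      have dist: "distinct (path_vertices v0 ?ps)"
        using inv(1) qpv xy unfolding alternating_path_def by (auto simp: pv_append chunk_def)
      have alt: "alternating_path E M v0 ?ps"
        by (rule alt_append[OF inv(1) _ q(3) dist]) (use xy q less.prems(2) in auto)
      have "card (used_pairs ?ps) = card (used_pairs ps) + 1"
        using used_notin[of x v0 ps y] qpv xy by (simp add: used_append used_pairs_def)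
      moreover note cU
      ultimately have "stinv E M V X ?U ?st"
        using alt pv inv qnot qpv qX qV unfolding stinv_def by auto
      moreover have "?U \<subseteq> M" "X \<inter> \<Union>?U = {}" "\<forall>x\<in>X. \<forall>y\<in>\<Union>?U. \<not> E x y"
        using less.prems(2,5,6) by auto
      ultimately show ?thesis
        using less.IH[OF m refl _ less.prems(3,4)] by simp
    next
      case False
      have bpv: "?b \<in> set (path_vertices v0 ps)" by (rule top_in)
      have bV: "?b \<in> V" using bpv inv(2) by blast
      have bX: "?b \<notin> X" using bpv inv(4) by blast
      have bU: "?b \<notin> \<Union>U" using bpv inv(3) by blast
      show ?thesis
      proof (cases "card (insert ?b X) < k")
        case True
        let ?X = "insert ?b X"
        let ?st = "if ps = [] then None else Some (v0, butlast ps)"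
        have m: "meas U ?st < n" using less.prems(1) st by (auto simp: meas_def)
        have cX: "card ?X = card X + 1" using bX finX by simp
        have "stinv E M V ?X U ?st"
        proof (cases "ps = []")
          case True
          then show ?thesis using inv(5) cX by (simp add: stinv_def used_pairs_def)
        next
          case ne: False
          have pvb: "path_vertices v0 ps = path_vertices v0 (butlast ps) @ chunk (last ps)"
            by (rule pv_butlast[OF ne])
          have "?b \<in> set (chunk (last ps))" using ne by (simp add: top_def chunk_def)
          then have "?b \<notin> set (path_vertices v0 (butlast ps))"
            using inv(1) pvb unfolding alternating_path_def by (metis disjoint_iff distinct_append)
          moreover have "set (path_vertices v0 (butlast ps)) \<subseteq> set (path_vertices v0 ps)"
            using pvb by auto
          ultimately show ?thesis using ne inv cX alt_butlast[OF inv(1)] used_butlast[of ps]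
            unfolding stinv_def by auto
        qed
        moreover have "?X \<subseteq> V" using bV less.prems(3) by blast
        moreover have "?X \<inter> \<Union>U = {}" using bU less.prems(5) by blast
        moreover have "\<forall>x\<in>?X. \<forall>y\<in>\<Union>U. \<not> E x y" using False less.prems(6) by blast
        ultimately show ?thesis using less.IH[OF m refl less.prems(2) _ True] by simp
      next
        case False2: False
        have cX: "card (insert ?b X) = k" using less.prems(4) bX finX False2 by simp
        have "card U < k"
        proof (rule ccontr)
          assume "\<not> card U < k"
          then have "k \<le> card (\<Union>U)" using card_le_Union[OF finV D less.prems(2)] by simp
          then obtain T where T: "T \<subseteq> \<Union>U" "card T = k" by (meson obtain_subset_with_card_n)
          have "\<Union>U \<subseteq> V" using less.prems(2) MV by blast
          then have TV: "T \<subseteq> V" using T(1) by blast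
          have SV: "insert ?b X \<subseteq> V" using bV less.prems(3) by blast
          have ST: "insert ?b X \<inter> T = {}" using bU less.prems(5) T(1) by blast
          have "\<exists>x\<in>insert ?b X. \<exists>y\<in>T. E x y"
            using H SV TV ST cX T(2) by blast
          then show False using T False less.prems(6) by blast
        qed
        then have "card M \<le> card (used_pairs ps) + (2 * k - 1)" using inv(5) cX bX finX kpos by simp
        then show ?thesis using inv(1) by blast
      qed
    qed
  qed
qed

theorem lemma3p17:
  fixes V :: "'a set" and E :: "'a \<Rightarrow> 'a \<Rightarrow> bool" and M :: "'a set set" and k :: nat
  assumes "simple_graph V E"
    and "k > 0"
    and "\<forall>S T. S \<subseteq> V \<and> T \<subseteq> V \<and> S \<inter> T = {} \<and> card S = k \<and> card T = k
              \<longrightarrow> (\<exists>x\<in>S. \<exists>y\<in>T. E x y)"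
    and "disjoint_pairs V M"
  shows "\<exists>v0 ps. alternating_path E M v0 ps \<and> card M \<le> card (used_pairs ps) + (2 * k - 1)"
proof -
  have s: "stinv E M V {} M (None :: ('a \<times> ('a \<times> 'a) list) option)" by (simp add: stinv_def)
  have "M \<subseteq> M" "{} \<subseteq> V" "card {} < k" "{} \<inter> \<Union>M = {}" "\<forall>x\<in>{}. \<forall>y\<in>\<Union>M. \<not> E x y"
    using assms(2) by auto
  from main[OF assms refl this s] show ?thesis .
qed

end
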